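(* For every integer $n\ge0$ and every real $x$, $$x\,\mathfrak{C}_n'(x)=\sum_{k=0}^{n-1}\binom nk\mathfrak{C}_k(x)\,\mathfrak{C}_{n-k}(x).$$
   Context: For $n\ge1$ the central factorial is $x^{[n]}=x\,(x+\tfrac n2-1)(x+\tfrac n2-2)\cdots(x-\tfrac n2+1)$ (a product of $n$ factors), and $x^{[0]}=1$. The central factorial numbers of the second kind $T(n,k)$ ($0\le k\le n$) are defined by $x^n=\sum_{k=0}^n T(n,k)\,x^{[k]}$; equivalently $T(n,k)=\frac1{k!}\sum_{j=0}^k(-1)^j\binom kj\left(\frac k2-j\right)^n$, and $T(n,k)=0$ for $k>n$. The $n$th central Fubini-like polynomial is $\mathfrak{C}_n(x)=\sum_{k=0}^n k!\,T(n,k)\,x^k$. *)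

theory Defs
  imports "HOL-Analysis.Analysis"
begin

definition central_fact_T :: "nat \<Rightarrow> nat \<Rightarrow> real" where
  "central_fact_T n k =
     (if k > n then 0
      else (1 / fact k) * (\<Sum>j=0..k. (-1)^j * real (k choose j) * (real k / 2 - real j)^n))"

definition central_fubini :: "nat \<Rightarrow> real \<Rightarrow> real" where
  "central_fubini n x = (\<Sum>k=0..n. fact k * central_fact_T n k * x^k)"

end

theory Submission imports Defs begin

definition D :: "nat \<Rightarrow> (nat \<Rightarrow> real) \<Rightarrow> real" where
  "D k f = (\<Sum>q\<le>k. (-1)^q * real (k choose q) * f q)"

lemma D_Suc: "D (Suc k) f = D k (\<lambda>q. f q - f (Suc q))"
proof -
  have s1: "D (Suc k) f = f 0 + (\<Sum>q\<le>k. (-1)^Suc q * real (Suc k choose Suc q) * f (Suc q))"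
    unfolding D_def by (subst sum.atMost_Suc_shift) simp
  also have s2: "\<dots> = f 0 + (\<Sum>q\<le>k. (-1)^Suc q * real (k choose q) * f (Suc q))
        + (\<Sum>q\<le>k. (-1)^Suc q * real (k choose Suc q) * f (Suc q))"
    unfolding binomial_Suc_Suc of_nat_add distrib_left distrib_right sum.distrib by (simp add: add.assoc)
  have s3: "f 0 + (\<Sum>q\<le>k. (-1)^Suc q * real (k choose Suc q) * f (Suc q)) = D k f"
  proof -
    have "D k f = (\<Sum>q\<le>Suc k. (-1)^q * real (k choose q) * f q)"
      unfolding D_def by simp
    also have "\<dots> = f 0 + (\<Sum>q\<le>k. (-1)^Suc q * real (k choose Suc q) * f (Suc q))"
      by (subst sum.atMost_Suc_shift) simp
    finally show ?thesis by simp
  qed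
  have "D (Suc k) f = D k f + (\<Sum>q\<le>k. (-1)^Suc q * real (k choose q) * f (Suc q))"
    using s1 s2 s3 by simp
  moreover have "D k (\<lambda>q. f q - f (Suc q)) = D k f - (\<Sum>q\<le>k. (-1)^q * real (k choose q) * f (Suc q))"
    unfolding D_def by (simp add: right_diff_distrib sum_subtractf)
  moreover have "(\<Sum>q\<le>k. (-1)^Suc q * real (k choose q) * f (Suc q)) = - (\<Sum>q\<le>k. (-1)^q * real (k choose q) * f (Suc q))"
    by (simp add: sum_negf[symmetric])
  ultimately show ?thesis by simp
qed

lemma D_lin: "D k (\<lambda>q. \<Sum>l\<in>A. c l * F l q) = (\<Sum>l\<in>A. c l * D k (F l))"
  unfolding D_def by (simp add: sum_distrib_left sum.swap[of _ A] mult_ac)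

lemma D_vanish: "n < k \<Longrightarrow> D k (\<lambda>q. (a - real q)^n) = 0"
proof (induction k arbitrary: n a)
  case 0 then show ?case by simp
next
  case (Suc k)
  have e: "(a - real q)^n - (a - real (Suc q))^n = (\<Sum>l<n. real (n choose l) * (a - 1 - real q)^l)" for q
  proof -
    have "(a - real q)^n = ((a - 1 - real q) + 1)^n" by simp
    also have "\<dots> = (\<Sum>l\<le>n. real (n choose l) * (a - 1 - real q)^l)"
      by (subst binomial_ring) simp
    also have "\<dots> = (\<Sum>l<n. real (n choose l) * (a - 1 - real q)^l) + (a - 1 - real q)^n"
      by (simp add: lessThan_Suc_atMost[symmetric])
    finally show ?thesis by (simp add: algebra_simps)
  qed
  have "D (Suc k) (\<lambda>q. (a - real q)^n) = D k (\<lambda>q. \<Sum>l<n. real (n choose l) * (a - 1 - real q)^l)"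
    by (simp only: D_Suc e)
  also have "\<dots> = (\<Sum>l<n. real (n choose l) * D k (\<lambda>q. (a - 1 - real q)^l))"
    by (rule D_lin)
  also have "\<dots> = 0" using Suc by (intro sum.neutral) auto
  finally show ?case .
qed

lemma D_conv: "D i (\<lambda>p. D j (\<lambda>q. h (p + q))) = D (i + j) h"
proof (induction j arbitrary: h)
  case 0 then show ?case by (simp add: D_def)
next
  case (Suc j)
  show ?case using Suc[of "\<lambda>r. h r - h (Suc r)"] by (simp add: D_Suc)
qed

lemma D_prod: "D i f * D j g = D i (\<lambda>p. D j (\<lambda>q. f p * g q))"
  unfolding D_def sum_product by (simp add: sum_distrib_left mult_ac)

definition B :: "nat \<Rightarrow> nat \<Rightarrow> real" where
  "B n k = D k (\<lambda>p. (real k / 2 - real p)^n)"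

lemma B_vanish: "n < k \<Longrightarrow> B n k = 0"
  unfolding B_def by (rule D_vanish)

lemma B_conv: "(\<Sum>k\<le>n. real (n choose k) * (B k i * B (n-k) j)) = B n (i+j)"
proof -
  let ?F = "\<lambda>k p q. (real i / 2 - real p)^k * (real j / 2 - real q)^(n-k)"
  have "(\<Sum>k\<le>n. real (n choose k) * (B k i * B (n-k) j))
      = (\<Sum>k\<le>n. real (n choose k) * D i (\<lambda>p. D j (\<lambda>q. ?F k p q)))"
    unfolding B_def D_prod by simp
  also have "\<dots> = D i (\<lambda>p. \<Sum>k\<le>n. real (n choose k) * D j (\<lambda>q. ?F k p q))"
    by (rule D_lin[symmetric])
  also have "\<dots> = D i (\<lambda>p. D j (\<lambda>q. \<Sum>k\<le>n. real (n choose k) * ?F k p q))"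
    by (subst D_lin) simp
  also have "\<dots> = D i (\<lambda>p. D j (\<lambda>q. (real (i+j) / 2 - real (p+q))^n))"
  proof -
    have "(\<Sum>k\<le>n. real (n choose k) * ?F k p q) = (real (i+j) / 2 - real (p+q))^n" for p q
    proof -
      have "(\<Sum>k\<le>n. real (n choose k) * ?F k p q) = ((real i / 2 - real p) + (real j / 2 - real q))^n"
        by (subst binomial_ring) (simp add: mult_ac)
      also have "(real i / 2 - real p) + (real j / 2 - real q) = real (i+j) / 2 - real (p+q)"
        by (simp add: field_simps)
      finally show ?thesis .
    qed
    then show ?thesis by simp
  qed
  also have "\<dots> = B n (i+j)"
    unfolding B_def by (rule D_conv[where h = "\<lambda>r. (real (i+j) / 2 - real r)^n"])
  finally show ?thesis .
qed

lemma B_00: "B 0 0 = 1" by (simp add: B_def D_def)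

lemma cf_B: "N \<ge> n \<Longrightarrow> central_fubini n x = (\<Sum>k\<le>N. B n k * x^k)"
proof -
  assume N: "N \<ge> n"
  have "central_fubini n x = (\<Sum>k\<le>n. B n k * x^k)"
    unfolding central_fubini_def central_fact_T_def B_def D_def
    by (intro sum.cong) (auto simp: atLeast0AtMost)
  also have "\<dots> = (\<Sum>k\<le>N. B n k * x^k)"
    using N by (intro sum.mono_neutral_left) (auto simp: B_vanish)
  finally show ?thesis .
qed

lemma square_sum:
  fixes g :: "nat \<Rightarrow> real"
  assumes "\<And>m. m > n \<Longrightarrow> g m = 0"
  shows "(\<Sum>i\<le>n. \<Sum>j\<le>n. g (i+j)) = (\<Sum>m\<le>n. real (Suc m) * g m)"
proof -
  have "(\<Sum>j\<le>n. g (i+j)) = (\<Sum>m\<le>n. if i \<le> m then g m else 0)" if "i \<le> n" for i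
  proof -
    have "(\<Sum>j\<le>n. g (i+j)) = (\<Sum>m\<in>(\<lambda>j. i+j) ` {..n}. g m)"
      by (simp add: sum.reindex)
    also have "\<dots> = (\<Sum>m\<in>{i..n}. g m)"
    proof (rule sum.mono_neutral_right)
      show "{i..n} \<subseteq> (\<lambda>j. i+j) ` {..n}"
      proof
        fix m assume "m \<in> {i..n}"
        then show "m \<in> (\<lambda>j. i+j) ` {..n}" by (intro image_eqI[of _ _ "m-i"]) auto
      qed
    qed (use assms in auto)
    also have "\<dots> = (\<Sum>m\<le>n. if i \<le> m then g m else 0)"
      by (simp add: sum.If_cases) (intro sum.cong, auto)
    finally show ?thesis .
  qed
  then have "(\<Sum>i\<le>n. \<Sum>j\<le>n. g (i+j)) = (\<Sum>i\<le>n. \<Sum>m\<le>n. if i \<le> m then g m else 0)"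
    by simp
  also have "\<dots> = (\<Sum>m\<le>n. \<Sum>i\<le>n. if i \<le> m then g m else 0)" by (rule sum.swap)
  also have "\<dots> = (\<Sum>m\<le>n. real (Suc m) * g m)"
  proof (intro sum.cong refl)
    fix m assume "m \<in> {..n}"
    then have "{..n} \<inter> {i. i \<le> m} = {..m}" by auto
    then show "(\<Sum>i\<le>n. if i \<le> m then g m else 0) = real (Suc m) * g m"
      by (simp add: sum.If_cases)
  qed
  finally show ?thesis .
qed

lemma prod_helper: "(c::real) * ((\<Sum>i\<in>A. f i) * (\<Sum>j\<in>C. g j)) = (\<Sum>i\<in>A. \<Sum>j\<in>C. c * (f i * g j))"
  unfolding sum_distrib_right unfolding sum_distrib_left by (rule refl)

theorem corollary6:
  fixes n :: nat and x :: real
  shows "x * deriv (central_fubini n) x =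
         (\<Sum>k=0..<n. real (n choose k) * central_fubini k x * central_fubini (n - k) x)"
proof -
  have fun_eq: "central_fubini n = (\<lambda>x. \<Sum>k\<le>n. B n k * x^k)"
    using cf_B[of n n] by auto
  have "((\<lambda>x. \<Sum>k\<le>n. B n k * x^k) has_field_derivative (\<Sum>k\<le>n. B n k * (real k * x^(k-1)))) (at x)"
    by (auto intro!: derivative_eq_intros sum.cong simp: mult_ac)
  then have "deriv (central_fubini n) x = (\<Sum>k\<le>n. B n k * (real k * x^(k-1)))"
    unfolding fun_eq by (rule DERIV_imp_deriv)
  then have L: "x * deriv (central_fubini n) x = (\<Sum>k\<le>n. real k * (B n k * x^k))"
  proof -
    have h: "x * (B n k * (real k * x^(k-1))) = real k * (B n k * x^k)" for k
      by (cases k) (auto simp: mult_ac)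
    show "deriv (central_fubini n) x = (\<Sum>k\<le>n. B n k * (real k * x ^ (k - 1))) \<Longrightarrow> ?thesis"
      by (simp only: sum_distrib_left h)
  qed
  have S: "(\<Sum>k\<le>n. real (n choose k) * central_fubini k x * central_fubini (n - k) x)
        = (\<Sum>m\<le>n. real (Suc m) * (B n m * x^m))"
  proof -
    have "(\<Sum>k\<le>n. real (n choose k) * central_fubini k x * central_fubini (n - k) x)
        = (\<Sum>k\<le>n. real (n choose k) * ((\<Sum>i\<le>n. B k i * x^i) * (\<Sum>j\<le>n. B (n-k) j * x^j)))"
      by (intro sum.cong refl) (simp add: cf_B[of _ n])
    also have "\<dots> = (\<Sum>k\<le>n. \<Sum>i\<le>n. \<Sum>j\<le>n. real (n choose k) * (B k i * B (n-k) j) * x^(i+j))"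
      by (simp only: prod_helper) (intro sum.cong refl, simp add: power_add mult_ac)
    also have "\<dots> = (\<Sum>i\<le>n. \<Sum>j\<le>n. \<Sum>k\<le>n. real (n choose k) * (B k i * B (n-k) j) * x^(i+j))"
      by (subst sum.swap, subst (2) sum.swap) simp
    also have "\<dots> = (\<Sum>i\<le>n. \<Sum>j\<le>n. B n (i+j) * x^(i+j))"
      by (simp add: sum_distrib_right[symmetric] B_conv)
    also have "\<dots> = (\<Sum>m\<le>n. real (Suc m) * (B n m * x^m))"
      by (rule square_sum) (simp add: B_vanish)
    finally show ?thesis .
  qed
  have C0: "central_fubini 0 x = 1" by (simp add: central_fubini_def central_fact_T_def)
  have "(\<Sum>k\<le>n. real (n choose k) * central_fubini k x * central_fubini (n - k) x)
      = (\<Sum>k=0..<n. real (n choose k) * central_fubini k x * central_fubini (n - k) x) + central_fubini n x"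
    by (simp add: atLeast0LessThan lessThan_Suc_atMost[symmetric] C0)
  moreover have "central_fubini n x = (\<Sum>m\<le>n. B n m * x^m)" by (rule cf_B) simp
  ultimately show ?thesis using L S
    by (simp add: algebra_simps sum.distrib)
qed

end
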